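(* For all integers $n\ge 2$, $k\ge 1$ and $j\ge 0$, the number of Fine $n$-paths having exactly $j$ short ascents and exactly $k$ long ascents equals \[\frac{1}{n+1}\binom{n-1-k}{k-1}\binom{n-2k}{j}\binom{n+1}{k}.\]
   Context: A Dyck $n$-path is a path from $(0,0)$ to $(2n,0)$ with $n$ upsteps $U=(1,1)$ and $n$ downsteps $D=(1,-1)$ never going below the $x$-axis. A hill is a peak $UD$ whose top vertex is at height $1$; a Fine $n$-path is a Dyck $n$-path with no hills. An ascent is a maximal run of consecutive upsteps; it is short if it has exactly one step and long otherwise. Binomial coefficients with lower index outside $[0,\text{upper}]$ are $0$. *)

theory Defs
  imports Complex_Main
begin

(* A lattice path is a list of steps: True = upstep U=(1,1), False = downstep D=(1,-1). *)

definition height :: "bool list \<Rightarrow> int" where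
  "height xs = int (length (filter id xs)) - int (length (filter Not xs))"

definition dyck_path :: "nat \<Rightarrow> bool list \<Rightarrow> bool" where
  "dyck_path n xs \<longleftrightarrow> length xs = 2 * n \<and> length (filter id xs) = n
     \<and> (\<forall>i \<le> length xs. height (take i xs) \<ge> 0) \<and> height xs = 0"

definition has_hill :: "bool list \<Rightarrow> bool" where
  "has_hill xs \<longleftrightarrow> (\<exists>i. Suc i < length xs \<and> xs ! i \<and> \<not> xs ! Suc i
      \<and> height (take (Suc i) xs) = 1)"

definition fine_path :: "nat \<Rightarrow> bool list \<Rightarrow> bool" where
  "fine_path n xs \<longleftrightarrow> dyck_path n xs \<and> \<not> has_hill xs"

function ascents :: "bool list \<Rightarrow> nat list" where
  "ascents [] = []"
| "ascents (False # xs) = ascents xs"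
| "ascents (True # xs) =
     length (takeWhile id (True # xs)) # ascents (dropWhile id xs)"
  by pat_completeness auto
termination
  by (relation "measure length") (auto simp: le_imp_less_Suc length_dropWhile_le)

definition short_ascents :: "bool list \<Rightarrow> nat" where
  "short_ascents xs = length (filter (\<lambda>m. m = 1) (ascents xs))"

definition long_ascents :: "bool list \<Rightarrow> nat" where
  "long_ascents xs = length (filter (\<lambda>m. m \<ge> 2) (ascents xs))"

definition ibinom :: "int \<Rightarrow> int \<Rightarrow> nat" where
  "ibinom a b = (if 0 \<le> b \<and> b \<le> a then nat a choose nat b else 0)"

end

theory Submission
  imports Defs
begin

definition Hh :: "nat list \<Rightarrow> nat \<Rightarrow> int" where
  "Hh c s = int (sum_list (take s c)) - int s"

definition cnt1 :: "nat list \<Rightarrow> nat" where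
  "cnt1 c = length (filter (\<lambda>m. m = 1) c)"

definition cnt2 :: "nat list \<Rightarrow> nat" where
  "cnt2 c = length (filter (\<lambda>m. 2 \<le> m) c)"

definition FC :: "nat \<Rightarrow> nat \<Rightarrow> nat \<Rightarrow> nat list set" where
  "FC n j k = {c. length c = n \<and> sum_list c = n \<and> (\<forall>s\<le>n. 0 \<le> Hh c s)
      \<and> (\<forall>s<n. c!s = 1 \<longrightarrow> 1 \<le> Hh c s) \<and> cnt1 c = j \<and> cnt2 c = k}"

lemma int_sum_list_update:
  "i < length xs \<Longrightarrow> int (sum_list (xs[i:=v])) = int (sum_list xs) + int v - int (xs!i)"
proof (induction xs arbitrary: i)
  case Nil then show ?case by simp
next
  case (Cons a xs) then show ?case by (cases i) auto
qed

lemma int_length_filter_update: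
  "i < length xs \<Longrightarrow> int (length (filter P (xs[i:=v]))) =
     int (length (filter P xs)) - (if P (xs!i) then 1 else 0) + (if P v then 1 else 0)"
proof (induction xs arbitrary: i)
  case Nil then show ?case by simp
next
  case (Cons a xs)
  show ?case
  proof (cases i)
    case 0 then show ?thesis by simp
  next
    case (Suc m)
    then have "m < length xs" using Cons.prems by simp
    from Cons.IH[OF this] Suc show ?thesis by (cases "P a") simp_all
  qed
qed

lemma Hh_update:
  assumes "t < length c"
  shows "Hh (c[t:=v]) s = Hh c s + (if t < s then int v - int (c!t) else 0)"
proof (cases "t < s")
  case True
  have "take s (c[t:=v]) = (take s c)[t:=v]" by (rule take_update_swap)
  moreover have "t < length (take s c)" using assms True by simp
  ultimately show ?thesis using True int_sum_list_update[of t "take s c" v] assms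
    by (simp add: Hh_def)
next
  case False
  then show ?thesis by (simp add: Hh_def)
qed

lemma Hh_Suc:
  assumes "s < length c"
  shows "Hh c (Suc s) = Hh c s + int (c!s) - 1"
  using assms by (simp add: Hh_def take_Suc_conv_app_nth)

lemma Hh_0[simp]: "Hh c 0 = 0"
  by (simp add: Hh_def)

lemma Hh_len: "Hh c (length c) = int (sum_list c) - int (length c)"
  by (simp add: Hh_def)

lemma sum_minus2:
  "sum_list (map (\<lambda>x. x - 2) c) + cnt1 c + 2 * cnt2 c = sum_list c"
proof (induction c)
  case Nil then show ?case by (simp add: cnt1_def cnt2_def)
next
  case (Cons a c)
  then show ?case by (cases "a = 0"; cases "a = 1") (auto simp: cnt1_def cnt2_def)
qed

lemma finite_FC: "finite (FC n j k)"
proof -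
  have "FC n j k \<subseteq> {c. set c \<subseteq> {..n} \<and> length c = n}"
    by (auto simp: FC_def dest: member_le_sum_list)
  moreover have "finite {c. set c \<subseteq> {..n} \<and> length c = n}"
    by (rule finite_lists_length_eq) simp
  ultimately show ?thesis by (rule finite_subset)
qed



definition phi :: "nat list \<Rightarrow> nat \<Rightarrow> nat list \<times> nat \<times> nat" where
  "phi c i = (let g = Hh c i; t = Max {s. s < i \<and> Hh c s < g}
              in (c[i:=0, t:=Suc (c!t)], t, nat (g - Hh c t + 2)))"

definition psi :: "nat list \<Rightarrow> nat \<Rightarrow> nat \<Rightarrow> nat list \<times> nat" where
  "psi c t p = (let l = Hh c t + int p - 1; i = (LEAST s. t < s \<and> Hh c (Suc s) < l)
              in (c[t := c!t - 1, i := 1], i))"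

lemma phi_props:
  assumes c: "c \<in> FC n j k" and i: "i < n" "c!i = 1"
  defines "g \<equiv> Hh c i"
  defines "t \<equiv> Max {s. s < i \<and> Hh c s < g}"
  shows "t < i" "Hh c t < g" "\<And>s. t < s \<Longrightarrow> s \<le> i \<Longrightarrow> g \<le> Hh c s"
        "g - Hh c t + 1 \<le> int (c!t)" "1 \<le> g"
proof -
  have len: "length c = n" using c by (simp add: FC_def)
  show g1: "1 \<le> g" using c i by (simp add: FC_def g_def)
  let ?T = "{s. s < i \<and> Hh c s < g}"
  have fin: "finite ?T" by simp
  have "i \<noteq> 0" using g1 by (metis Hh_0 g_def not_one_le_zero)
  then have "0 \<in> ?T" using g1 by simp
  then have ne: "?T \<noteq> {}" by blast
  have tT: "t \<in> ?T" unfolding t_def using Max_in[OF fin ne] .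
  then show "t < i" "Hh c t < g" by auto
  show above: "g \<le> Hh c s" if "t < s" "s \<le> i" for s
  proof (rule ccontr)
    assume "\<not> g \<le> Hh c s"
    moreover have "s \<noteq> i" using that(1) \<open>\<not> g \<le> Hh c s\<close> g_def by auto
    ultimately have "s \<in> ?T" using that by auto
    then have "s \<le> t" unfolding t_def using Max_ge[OF fin] by blast
    then show False using that by simp
  qed
  have "g \<le> Hh c (Suc t)" using above \<open>t < i\<close> by simp
  moreover have "Hh c (Suc t) = Hh c t + int (c!t) - 1" using Hh_Suc \<open>t < i\<close> i len by simp
  ultimately show "g - Hh c t + 1 \<le> int (c!t)" by simp
qed

lemma Hh_phi:
  assumes "t < i" "i < length c" "c!i = 1"
  shows "Hh (c[i:=0, t:=Suc (c!t)]) s = Hh c s + (if t < s then 1 else 0) - (if i < s then 1 else 0)"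
  using assms by (simp add: Hh_update)

lemma Hh_psi:
  assumes "t < i" "i < length c" "c!i = 0" "1 \<le> c!t"
  shows "Hh (c[t := c!t - 1, i := 1]) s = Hh c s - (if t < s then 1 else 0) + (if i < s then 1 else 0)"
  using assms by (simp add: Hh_update of_nat_diff)

definition XS :: "nat \<Rightarrow> nat \<Rightarrow> nat \<Rightarrow> (nat list \<times> nat) set" where
  "XS n j k = {(c,i). c \<in> FC n j k \<and> i < n \<and> c!i = 1}"

definition YS :: "nat \<Rightarrow> nat \<Rightarrow> nat \<Rightarrow> (nat list \<times> nat \<times> nat) set" where
  "YS n j k = {(c,t,p). c \<in> FC n j k \<and> t < n \<and> 3 \<le> p \<and> p \<le> c!t}"

lemma phi_good:
  assumes c: "c \<in> FC n j k" and i: "i < n" "c!i = 1"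
  shows "phi c i \<in> YS n (j-1) k \<and> (case phi c i of (c',t,p) \<Rightarrow> psi c' t p) = (c, i)"
proof -
  define g where "g = Hh c i"
  define t where "t = Max {s. s < i \<and> Hh c s < g}"
  note P = phi_props[OF c i, folded g_def, folded t_def]
  have len: "length c = n" and sum: "sum_list c = n" and nn: "\<forall>s\<le>n. 0 \<le> Hh c s"
    and fine: "\<forall>s<n. c!s = 1 \<longrightarrow> 1 \<le> Hh c s" and c1: "cnt1 c = j" and c2: "cnt2 c = k"
    using c by (auto simp: FC_def)
  define c' where "c' = c[i:=0, t:=Suc (c!t)]"
  define p where "p = nat (g - Hh c t + 2)"
  have phi_eq: "phi c i = (c', t, p)" by (simp add: phi_def Let_def g_def t_def c'_def p_def)
  have ti: "t < i" "t \<noteq> i" using P by auto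
  have H': "Hh c' s = Hh c s + (if t < s then 1 else 0) - (if i < s then 1 else 0)" for s
    unfolding c'_def using Hh_phi[OF ti(1) _ i(2)] len i by simp
  have ct2: "2 \<le> c!t" using P by linarith
  have len': "length c' = n" by (simp add: c'_def len)
  have Hn: "Hh c n = 0" using Hh_len[of c] len sum by simp
  have sum': "sum_list c' = n" using H'[of n] Hn Hh_len[of c'] len' ti i by simp
  have nn': "\<forall>s\<le>n. 0 \<le> Hh c' s"
  proof (intro allI impI)
    fix s assume "s \<le> n"
    then show "0 \<le> Hh c' s" using nn H'[of s] ti by auto
  qed
  have c'nth: "c'!s = (if s = t then Suc (c!t) else if s = i then 0 else c!s)" for s
    using len i ti by (simp add: c'_def nth_list_update)
  have fine': "\<forall>s<n. c'!s = 1 \<longrightarrow> 1 \<le> Hh c' s"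
  proof (intro allI impI)
    fix s assume "s < n" "c'!s = 1"
    then have "s \<noteq> t" "s \<noteq> i" "c!s = 1" using c'nth[of s] ct2 by (auto split: if_splits)
    then show "1 \<le> Hh c' s" using fine \<open>s < n\<close> H'[of s] ti by auto
  qed
  have tl: "t < length (c[i:=0])" "i < length c" using ti i len by auto
  have "int (cnt1 c') = int (cnt1 c) - 1"
    unfolding c'_def cnt1_def
    using int_length_filter_update[OF tl(1), of "\<lambda>m. m = 1" "Suc (c!t)"]
      int_length_filter_update[OF tl(2), of "\<lambda>m. m = 1" 0] ti ct2 i
    by (simp add: nth_list_update)
  then have c1': "cnt1 c' = j - 1" using c1 by simp
  have "int (cnt2 c') = int (cnt2 c)"
    unfolding c'_def cnt2_def
    using int_length_filter_update[OF tl(1), of "\<lambda>m. 2 \<le> m" "Suc (c!t)"]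
      int_length_filter_update[OF tl(2), of "\<lambda>m. 2 \<le> m" 0] ti ct2 i
    by (simp add: nth_list_update)
  then have c2': "cnt2 c' = k" using c2 by simp
  have p3: "3 \<le> p" using P by (simp add: p_def)
  have pc: "p \<le> c'!t" using P c'nth[of t] by (simp add: p_def)
  have inY: "(c', t, p) \<in> YS n (j-1) k"
    using len' sum' nn' fine' c1' c2' p3 pc ti i by (auto simp: YS_def FC_def)
  have Ht: "Hh c' t = Hh c t" using H'[of t] ti by simp
  have l: "Hh c' t + int p - 1 = g + 1" using Ht P by (simp add: p_def)
  have least: "(LEAST s. t < s \<and> Hh c' (Suc s) < g + 1) = i"
  proof (rule Least_equality)
    have "Hh c (Suc i) = g" using Hh_Suc[of i c] i len by (simp add: g_def)
    then show "t < i \<and> Hh c' (Suc i) < g + 1" using H'[of "Suc i"] ti by simp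
  next
    fix s assume s: "t < s \<and> Hh c' (Suc s) < g + 1"
    show "i \<le> s"
    proof (rule ccontr)
      assume "\<not> i \<le> s"
      then have "g \<le> Hh c (Suc s)" using P(3)[of "Suc s"] s by simp
      then show False using s H'[of "Suc s"] \<open>\<not> i \<le> s\<close> by (auto split: if_splits)
    qed
  qed
  have "t < n" using ti i by simp
  have bk: "c'[t := c'!t - 1, i := 1] = c"
    by (rule nth_equalityI) (use \<open>t < n\<close> in \<open>auto simp: c'nth len' len i ti nth_list_update\<close>)
  have "psi c' t p = (c, i)"
    unfolding psi_def Let_def l least bk by simp
  then show ?thesis using inY phi_eq by simp
qed

lemma psi_good:
  assumes Y: "(c', t, p) \<in> YS n j k"
  shows "psi c' t p \<in> XS n (Suc j) k \<and> (case psi c' t p of (c,i) \<Rightarrow> phi c i) = (c', t, p)"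
proof -
  have len: "length c' = n" and sum: "sum_list c' = n" and nn: "\<forall>s\<le>n. 0 \<le> Hh c' s"
    and fine: "\<forall>s<n. c'!s = 1 \<longrightarrow> 1 \<le> Hh c' s" and c1: "cnt1 c' = j" and c2: "cnt2 c' = k"
    and tn: "t < n" and p3: "3 \<le> p" and pc: "p \<le> c'!t"
    using Y by (auto simp: FC_def YS_def)
  define l where "l = Hh c' t + int p - 1"
  have Hn: "Hh c' n = 0" using Hh_len[of c'] len sum by simp
  have HSt: "Hh c' (Suc t) = Hh c' t + int (c'!t) - 1" using Hh_Suc[of t c'] tn len by simp
  have Ht0: "0 \<le> Hh c' t" using nn tn by simp
  have l2: "2 \<le> l" using Ht0 p3 by (simp add: l_def)
  have stn: "Suc t < n"
  proof (rule ccontr)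
    assume "\<not> Suc t < n"
    then have "Suc t = n" using tn by simp
    then show False using HSt Hn Ht0 pc p3 by simp
  qed
  define i where "i = (LEAST s. t < s \<and> Hh c' (Suc s) < l)"
  have ex: "t < n - 1 \<and> Hh c' (Suc (n - 1)) < l" using stn Hn l2 by simp
  have iP: "t < i \<and> Hh c' (Suc i) < l" unfolding i_def by (rule LeastI[of _ "n - 1"]) (rule ex)
  have "i \<le> n - 1" unfolding i_def by (rule Least_le) (rule ex)
  then have "i < n" using stn by simp
  have low: "l \<le> Hh c' s" if st: "t < s" "s \<le> i" for s
  proof (cases "s = Suc t")
    case True then show ?thesis using HSt pc by (simp add: l_def)
  next
    case False
    then obtain s' where s': "s = Suc s'" "t < s'" "s' < i" using st
      by (cases s) auto
    have "\<not> (t < s' \<and> Hh c' (Suc s') < l)" unfolding i_def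
      by (rule not_less_Least) (use s' in \<open>simp add: i_def\<close>)
    then show ?thesis using s' by simp
  qed
  have Hi: "l \<le> Hh c' i" using low iP by simp
  have HSi: "Hh c' (Suc i) = Hh c' i + int (c'!i) - 1" using Hh_Suc[of i c'] \<open>i < n\<close> len by simp
  have ci0: "c'!i = 0" using Hi HSi iP by simp
  have Hil: "Hh c' i = l" using Hi HSi iP ci0 by simp
  define c where "c = c'[t := c'!t - 1, i := 1]"
  have ti: "t < i" "t \<noteq> i" using iP by auto
  have ct1: "1 \<le> c'!t" using pc p3 by simp
  have H: "Hh c s = Hh c' s - (if t < s then 1 else 0) + (if i < s then 1 else 0)" for s
    unfolding c_def using Hh_psi[OF ti(1) _ ci0 ct1] \<open>i < n\<close> len by simp
  have cnth: "c!s = (if s = i then 1 else if s = t then c'!t - 1 else c'!s)" for s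
    using len \<open>i < n\<close> tn ti by (simp add: c_def nth_list_update)
  have lenc: "length c = n" by (simp add: c_def len)
  have sumc: "sum_list c = n" using H[of n] Hn Hh_len[of c] lenc ti \<open>i < n\<close> by simp
  have nnc: "\<forall>s\<le>n. 0 \<le> Hh c s"
  proof (intro allI impI)
    fix s assume "s \<le> n"
    show "0 \<le> Hh c s"
    proof (cases "t < s \<and> s \<le> i")
      case True then show ?thesis using low[of s] l2 H[of s] by simp
    next
      case False then show ?thesis using nn \<open>s \<le> n\<close> H[of s] ti by auto
    qed
  qed
  have finec: "\<forall>s<n. c!s = 1 \<longrightarrow> 1 \<le> Hh c s"
  proof (intro allI impI)
    fix s assume s: "s < n" "c!s = 1"
    show "1 \<le> Hh c s"
    proof (cases "s = i")
      case True then show ?thesis using H[of i] Hil l2 ti by simp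
    next
      case False
      then have "s \<noteq> t" using s cnth[of s] pc p3 by auto
      then have "c'!s = 1" using s cnth[of s] \<open>s \<noteq> i\<close> by simp
      then have "1 \<le> Hh c' s" using fine s by simp
      show ?thesis
      proof (cases "t < s \<and> s \<le> i")
        case True then show ?thesis using low[of s] l2 H[of s] by simp
      next
        case False then show ?thesis using \<open>1 \<le> Hh c' s\<close> H[of s] ti \<open>s \<noteq> i\<close> by auto
      qed
    qed
  qed
  have tl: "i < length (c'[t := c'!t - 1])" "t < length c'" using ti \<open>i < n\<close> len by auto
  have u1: "(c'[t := c'!t - 1])!i = 0" using ci0 ti tl by simp
  have u2: "2 \<le> c'!t - 1" using pc p3 by simp
  have A1: "int (length (filter (\<lambda>m. m = 1) c)) = int (length (filter (\<lambda>m. m = 1) (c'[t := c'!t - 1]))) + 1"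
    unfolding c_def using int_length_filter_update[OF tl(1), of "\<lambda>m. m = 1" 1] u1 by simp
  have A2: "int (length (filter (\<lambda>m. m = 1) (c'[t := c'!t - 1]))) = int (length (filter (\<lambda>m. m = 1) c'))"
    using int_length_filter_update[OF tl(2), of "\<lambda>m. m = 1" "c'!t - 1"] u2 by simp
  have "int (cnt1 c) = int (cnt1 c') + 1" unfolding cnt1_def using A1 A2 by simp
  then have c1c: "cnt1 c = Suc j" using c1 by simp
  have B1: "int (length (filter (\<lambda>m. 2 \<le> m) c)) = int (length (filter (\<lambda>m. 2 \<le> m) (c'[t := c'!t - 1])))"
    unfolding c_def using int_length_filter_update[OF tl(1), of "\<lambda>m. 2 \<le> m" 1] u1 by simp
  have B2: "int (length (filter (\<lambda>m. 2 \<le> m) (c'[t := c'!t - 1]))) = int (length (filter (\<lambda>m. 2 \<le> m) c'))"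
    using int_length_filter_update[OF tl(2), of "\<lambda>m. 2 \<le> m" "c'!t - 1"] u2 by simp
  have "int (cnt2 c) = int (cnt2 c')" unfolding cnt2_def using B1 B2 by simp
  then have c2c: "cnt2 c = k" using c2 by simp
  have inX: "(c, i) \<in> XS n (Suc j) k"
    using lenc sumc nnc finec c1c c2c \<open>i < n\<close> cnth[of i] by (auto simp: XS_def FC_def)
  have psi_eq: "psi c' t p = (c, i)" by (simp add: psi_def Let_def l_def i_def c_def)
  define g where "g = Hh c i"
  have g: "g = l - 1" using H[of i] Hil ti by (simp add: g_def)
  have Htc: "Hh c t = Hh c' t" using H[of t] ti by simp
  have mx: "Max {s. s < i \<and> Hh c s < g} = t"
  proof (rule Max_eqI)
    show "finite {s. s < i \<and> Hh c s < g}" by simp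
  next
    show "t \<in> {s. s < i \<and> Hh c s < g}" using ti Htc g p3 by (simp add: l_def)
  next
    fix y assume y: "y \<in> {s. s < i \<and> Hh c s < g}"
    show "y \<le> t"
    proof (rule ccontr)
      assume "\<not> y \<le> t"
      then have "l \<le> Hh c' y" using low[of y] y by simp
      then show False using y H[of y] g \<open>\<not> y \<le> t\<close> by (auto split: if_splits)
    qed
  qed
  have pp: "nat (g - Hh c t + 2) = p" using g Htc by (simp add: l_def)
  have ctt: "Suc (c!t) = c'!t" using cnth[of t] ti ct1 by simp
  have ct1': "Suc (c'!t - Suc 0) = c'!t" using ct1 by simp
  have bk: "c[i:=0, t:=Suc (c!t)] = c'"
    by (rule nth_equalityI) (use tn \<open>i < n\<close> in \<open>auto simp: cnth lenc len ti ctt ci0 ct1' nth_list_update\<close>)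
  have "phi c i = (c', t, p)"
    unfolding phi_def Let_def g_def[symmetric] mx pp bk by simp
  then show ?thesis using inX psi_eq by simp
qed



lemma card_XS: "card (XS n j k) = j * card (FC n j k)"
proof -
  have eq: "XS n j k = Sigma (FC n j k) (\<lambda>c. {i. i < n \<and> c!i = 1})"
    by (auto simp: XS_def)
  have "card (XS n j k) = (\<Sum>c\<in>FC n j k. card {i. i < n \<and> c!i = 1})"
    unfolding eq by (rule card_SigmaI) (auto simp: finite_FC)
  also have "\<dots> = (\<Sum>c\<in>FC n j k. j)"
  proof (rule sum.cong)
    fix c assume "c \<in> FC n j k"
    then have "length c = n" "cnt1 c = j" by (auto simp: FC_def)
    then show "card {i. i < n \<and> c!i = 1} = j"
      using length_filter_conv_card[of "\<lambda>m. m = 1" c] by (simp add: cnt1_def)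
  qed simp
  finally show ?thesis by simp
qed

lemma card_YS: "card (YS n j k) = card (FC n j k) * (n - j - 2*k)"
proof -
  have eq: "YS n j k = Sigma (FC n j k) (\<lambda>c. Sigma {..<n} (\<lambda>t. {3..c!t}))"
    by (auto simp: YS_def)
  have "card (YS n j k) = (\<Sum>c\<in>FC n j k. card (Sigma {..<n} (\<lambda>t. {3..c!t})))"
    unfolding eq by (rule card_SigmaI) (auto simp: finite_FC)
  also have "\<dots> = (\<Sum>c\<in>FC n j k. n - j - 2*k)"
  proof (rule sum.cong)
    fix c assume "c \<in> FC n j k"
    then have len: "length c = n" and s: "sum_list c = n" and "cnt1 c = j" "cnt2 c = k"
      by (auto simp: FC_def)
    have "card (Sigma {..<n} (\<lambda>t. {3..c!t})) = (\<Sum>t<n. card {3..c!t})"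
      by (rule card_SigmaI) auto
    also have "\<dots> = (\<Sum>t<n. c!t - 2)" by simp
    also have "\<dots> = sum_list (map (\<lambda>x. x - 2) c)"
      using len by (simp add: sum_list_sum_nth atLeast0LessThan)
    also have "\<dots> = n - j - 2*k"
      using sum_minus2[of c] s \<open>cnt1 c = j\<close> \<open>cnt2 c = k\<close> by simp
    finally show "card (Sigma {..<n} (\<lambda>t. {3..c!t})) = n - j - 2*k" .
  qed simp
  finally show ?thesis by simp
qed

lemma card_XY: "card (XS n (Suc j) k) = card (YS n j k)"
proof -
  have "bij_betw (\<lambda>(c,i). phi c i) (XS n (Suc j) k) (YS n j k)"
  proof (rule bij_betw_byWitness[where f' = "\<lambda>(c,t,p). psi c t p"])
    show "\<forall>a\<in>XS n (Suc j) k. (\<lambda>(c,t,p). psi c t p) ((\<lambda>(c,i). phi c i) a) = a"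
      using phi_good by (force simp: XS_def split: prod.splits)
    show "\<forall>a\<in>YS n j k. (\<lambda>(c,i). phi c i) ((\<lambda>(c,t,p). psi c t p) a) = a"
      using psi_good by (force split: prod.splits)
    show "(\<lambda>(c,i). phi c i) ` XS n (Suc j) k \<subseteq> YS n j k"
      using phi_good by (force simp: XS_def)
    show "(\<lambda>(c,t,p). psi c t p) ` YS n j k \<subseteq> XS n (Suc j) k"
      using psi_good by force
  qed
  then show ?thesis by (rule bij_betw_same_card)
qed

lemma FC_formula: "card (FC n j k) = card (FC n 0 k) * ((n - 2*k) choose j)"
proof (induction j)
  case 0 then show ?case by simp
next
  case (Suc j)
  define m where "m = n - 2*k"
  have "Suc j * card (FC n (Suc j) k) = card (FC n j k) * (n - j - 2*k)"
    using card_XS[of n "Suc j" k] card_XY[of n j k] card_YS[of n j k] by simp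
  also have "\<dots> = card (FC n 0 k) * ((m choose j) * (m - j))"
  proof -
    have "n - j - 2*k = m - j" by (simp add: m_def)
    then show ?thesis using Suc.IH by (simp add: m_def)
  qed
  also have "(m choose j) * (m - j) = Suc j * (m choose Suc j)"
    using binomial_absorption[of j m] binomial_absorb_comp[of m j] by (simp add: mult.commute)
  finally have "Suc j * card (FC n (Suc j) k) = Suc j * (card (FC n 0 k) * (m choose Suc j))"
    by (simp only: mult.left_commute)
  then show ?case unfolding m_def by (simp only: mult_cancel1) (simp add: add.commute)
qed



definition Luk :: "nat \<Rightarrow> nat list \<Rightarrow> bool" where
  "Luk n w \<longleftrightarrow> length w = Suc n \<and> sum_list w = n \<and> (\<forall>s\<le>n. 0 \<le> Hh w s)"

lemma int_sum_take_drop: "int (sum_list (take s u)) + int (sum_list (drop s u)) = int (sum_list u)"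
  by (metis append_take_drop_id of_nat_add sum_list_append)

lemma len_filter_take_drop:
  "length (filter P (take s u)) + length (filter P (drop s u)) = length (filter P u)"
  by (metis append_take_drop_id filter_append length_append)

lemma rotate_filter_len: "length (filter P (rotate r w)) = length (filter P w)"
  using len_filter_take_drop[of P "r mod length w" w]
  by (simp add: rotate_drop_take)

lemma rotate_sum: "sum_list (rotate r (w::nat list)) = sum_list w"
  using int_sum_take_drop[of "r mod length w" w]
  by (simp add: rotate_drop_take)

lemma K_rot:
  assumes L: "Luk n w" and r: "0 < r" "r \<le> n"
  shows "\<not> Luk n (rotate r w)"
proof
  assume L2: "Luk n (rotate r w)"
  have len: "length w = Suc n" and sw: "sum_list w = n" and nn: "\<forall>s\<le>n. 0 \<le> Hh w s"
    using L by (auto simp: Luk_def)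
  have rot: "rotate r w = drop r w @ take r w" using r len by (simp add: rotate_drop_take)
  have tk: "take (Suc n - r) (rotate r w) = drop r w" using rot len by simp
  have "0 \<le> Hh (rotate r w) (Suc n - r)" using L2 r by (simp add: Luk_def)
  then have A: "int (Suc n - r) \<le> int (sum_list (drop r w))" using tk by (simp add: Hh_def)
  have "0 \<le> Hh w r" using nn r by simp
  then have B: "int r \<le> int (sum_list (take r w))" by (simp add: Hh_def min_def)
  show False using A B int_sum_take_drop[of r w] sw r by simp
qed

lemma E_rot:
  assumes len: "length u = Suc n" and su: "sum_list u = n"
  shows "\<exists>s\<le>n. Luk n (rotate s u)"
proof -
  define m where "m = Min ((Hh u) ` {..n})"
  have fin: "finite ((Hh u) ` {..n})" by simp
  have ne: "(Hh u) ` {..n} \<noteq> {}" by simp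
  have mle: "m \<le> Hh u t" if "t \<le> n" for t unfolding m_def using Min_le[OF fin] that by simp
  have "m \<in> (Hh u) ` {..n}" unfolding m_def using Min_in[OF fin ne] .
  then obtain s0 where s0: "s0 \<le> n" "Hh u s0 = m" by auto
  define s where "s = (LEAST s. s \<le> n \<and> Hh u s = m)"
  have sP: "s \<le> n \<and> Hh u s = m" unfolding s_def by (rule LeastI[of _ s0]) (use s0 in simp)
  have sL: "Hh u t \<noteq> m" if "t < s" for t
  proof
    assume "Hh u t = m"
    have "s \<le> t" unfolding s_def by (rule Least_le) (use that sP \<open>Hh u t = m\<close> in auto)
    then show False using that by simp
  qed
  have HN: "Hh u (Suc n) = -1" using len su Hh_len[of u] by simp
  have rot: "rotate s u = drop s u @ take s u" using sP len by (simp add: rotate_drop_take)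
  have ssum: "int (sum_list (take s u)) + int (sum_list (drop s u)) = int n"
    using int_sum_take_drop[of s u] su by simp
  have "0 \<le> Hh (rotate s u) t" if t: "t \<le> n" for t
  proof (cases "t \<le> Suc n - s")
    case True
    then have tk: "take t (rotate s u) = take t (drop s u)" using rot len by simp
    have "take (s + t) u = take s u @ take t (drop s u)" by (rule take_add)
    then have "sum_list (take t (drop s u)) = sum_list (take (s+t) u) - sum_list (take s u)" by simp
    then have Hr: "Hh (rotate s u) t = Hh u (s + t) - Hh u s"
      using tk \<open>take (s + t) u = _\<close> by (simp add: Hh_def)
    show ?thesis
    proof (cases "s + t \<le> n")
      case True then show ?thesis using Hr mle[of "s+t"] sP by simp
    next
      case False
      then have st: "s + t = Suc n" using \<open>t \<le> Suc n - s\<close> sP by linarith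
      then have "0 < s" using t by simp
      then have "Hh u 0 \<noteq> m" using sL[of 0] by simp
      then have "m < 0" using mle[of 0] by simp
      then show ?thesis using Hr st HN sP by simp
    qed
  next
    case False
    define t' where "t' = t - (Suc n - s)"
    have t's: "t' < s" using False t sP by (simp add: t'_def)
    have ld: "length (drop s u) = Suc n - s" using len by simp
    have "take t (rotate s u) = take t (drop s u) @ take (t - length (drop s u)) (take s u)"
      unfolding rot by (rule take_append)
    also have "take t (drop s u) = drop s u" using False ld by simp
    also have "take (t - length (drop s u)) (take s u) = take t' u"
      using ld t's by (simp add: t'_def min_def)
    finally have tk: "take t (rotate s u) = drop s u @ take t' u" .
    have "Hh u t' \<noteq> m" using sL t's by simp
    then have "m + 1 \<le> Hh u t'" using mle[of t'] t's sP by simp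
    moreover have "Hh (rotate s u) t = int (sum_list (drop s u)) + int (sum_list (take t' u)) - int t"
      using tk by (simp add: Hh_def)
    moreover have "int t = int t' + int (Suc n) - int s" using False t sP by (simp add: t'_def)
    ultimately show ?thesis using ssum sP by (simp add: Hh_def)
  qed
  then have "Luk n (rotate s u)" using len su by (simp add: Luk_def rotate_sum)
  then show ?thesis using sP by blast
qed



lemma cycle_lemma:
  assumes inv: "\<And>r w. Q (rotate r w) = Q w"
  shows "card {w. length w = Suc n \<and> sum_list w = n \<and> Q w} = Suc n * card {w. Luk n w \<and> Q w}"
proof -
  let ?A = "{w. Luk n w \<and> Q w}"
  let ?B = "{w. length w = Suc n \<and> sum_list w = n \<and> Q w}"
  have back_rot: "rotate (Suc n - r) (rotate r' w) = rotate (r' - r) w"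
    if "length w = Suc n" "r \<le> r'" "r' \<le> n" for w :: "nat list" and r r'
  proof -
    have "rotate (Suc n - r) (rotate r' w) = rotate (Suc n - r + r') w" by (simp add: rotate_rotate)
    also have "\<dots> = rotate ((Suc n - r + r') mod Suc n) w" using that by (metis rotate_conv_mod)
    also have "(Suc n - r + r') mod Suc n = (r' - r) mod Suc n"
    proof -
      have "Suc n - r + r' = (r' - r) + Suc n" using that by simp
      then show ?thesis by (metis mod_add_self2)
    qed
    also have "rotate ((r' - r) mod Suc n) w = rotate (r' - r) w" using that by (metis rotate_conv_mod)
    finally show ?thesis .
  qed
  have inj_aux: "r = r' \<and> w = w'"
    if "Luk n w" "Luk n w'" "r \<le> n" "r' \<le> n" "rotate r w = rotate r' w'" "r \<le> r'" for w w' r r'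
  proof -
    have lw: "length w = Suc n" "length w' = Suc n" using that by (auto simp: Luk_def)
    have e1: "rotate (Suc n - r) (rotate r w) = w" using back_rot[OF lw(1), of r r] that by simp
    have "w = rotate (Suc n - r) (rotate r' w')" by (metis e1 that(5))
    also have "\<dots> = rotate (r' - r) w'" using back_rot[OF lw(2)] that by simp
    finally have ww: "w = rotate (r' - r) w'" .
    have "r' - r = 0"
    proof (rule ccontr)
      assume "r' - r \<noteq> 0"
      then show False using K_rot[of n w' "r' - r"] that ww by simp
    qed
    then show ?thesis using ww that by simp
  qed
  have bij: "bij_betw (\<lambda>(w,r). rotate r w) (?A \<times> {..n}) ?B"
  proof (rule bij_betw_imageI)
    show "inj_on (\<lambda>(w,r). rotate r w) (?A \<times> {..n})"
    proof (rule inj_onI)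
      fix x y assume x: "x \<in> ?A \<times> {..n}" and y: "y \<in> ?A \<times> {..n}"
        and e: "(\<lambda>(w,r). rotate r w) x = (\<lambda>(w,r). rotate r w) y"
      obtain w r where xw: "x = (w, r)" by (cases x)
      obtain w' r' where yw: "y = (w', r')" by (cases y)
      have h: "Luk n w" "Luk n w'" "r \<le> n" "r' \<le> n" "rotate r w = rotate r' w'"
        using x y e xw yw by auto
      show "x = y"
      proof (cases "r \<le> r'")
        case True then show ?thesis using inj_aux[OF h] xw yw by simp
      next
        case False
        then have "r' \<le> r" by simp
        then show ?thesis using inj_aux[OF h(2,1,4,3) h(5)[symmetric]] xw yw by simp
      qed
    qed
  next
    show "(\<lambda>(w,r). rotate r w) ` (?A \<times> {..n}) = ?B"
    proof
      show "(\<lambda>(w,r). rotate r w) ` (?A \<times> {..n}) \<subseteq> ?B"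
        using inv by (auto simp: Luk_def rotate_sum)
    next
      show "?B \<subseteq> (\<lambda>(w,r). rotate r w) ` (?A \<times> {..n})"
      proof
        fix u assume u: "u \<in> ?B"
        then obtain s where s: "s \<le> n" "Luk n (rotate s u)" using E_rot by blast
        define r where "r = (if s = 0 then 0 else Suc n - s)"
        have "rotate r (rotate s u) = u"
        proof (cases "s = 0")
          case True then show ?thesis by (simp add: r_def)
        next
          case False
          then have "r + s = Suc n" using s by (simp add: r_def)
          then have "rotate r (rotate s u) = rotate (Suc n) u" by (simp only: rotate_rotate)
          also have "\<dots> = u" using u by (intro rotate_id) simp
          finally show ?thesis .
        qed
        moreover have "(rotate s u, r) \<in> ?A \<times> {..n}" using s u inv r_def by auto
        ultimately show "u \<in> (\<lambda>(w,r). rotate r w) ` (?A \<times> {..n})" by force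
      qed
    qed
  qed
  have "card ?B = card (?A \<times> {..n})" using bij_betw_same_card[OF bij] by simp
  also have "\<dots> = card ?A * Suc n" by (simp add: card_cartesian_product)
  finally show ?thesis by simp
qed



lemma Hh_snoc0: "s \<le> length c \<Longrightarrow> Hh (c @ [0]) s = Hh c s"
  by (simp add: Hh_def)

lemma cnt1_nz: "cnt1 c = 0 \<Longrightarrow> x \<in> set c \<Longrightarrow> x \<noteq> 1"
  by (auto simp: cnt1_def filter_empty_conv)

lemma FC0_Luk: "card (FC n 0 k) = card {w. Luk n w \<and> cnt1 w = 0 \<and> cnt2 w = k}"
proof -
  have eq: "{w. Luk n w \<and> cnt1 w = 0 \<and> cnt2 w = k} = (\<lambda>c. c @ [0]) ` FC n 0 k"
  proof
    show "(\<lambda>c. c @ [0]) ` FC n 0 k \<subseteq> {w. Luk n w \<and> cnt1 w = 0 \<and> cnt2 w = k}"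
    proof
      fix w assume "w \<in> (\<lambda>c. c @ [0]) ` FC n 0 k"
      then obtain c where c: "c \<in> FC n 0 k" "w = c @ [0]" by auto
      then have "length c = n" "sum_list c = n" "\<forall>s\<le>n. 0 \<le> Hh c s" "cnt1 c = 0" "cnt2 c = k"
        by (auto simp: FC_def)
      then show "w \<in> {w. Luk n w \<and> cnt1 w = 0 \<and> cnt2 w = k}"
        using c Hh_snoc0[of _ c] by (auto simp: Luk_def cnt1_def cnt2_def)
    qed
  next
    show "{w. Luk n w \<and> cnt1 w = 0 \<and> cnt2 w = k} \<subseteq> (\<lambda>c. c @ [0]) ` FC n 0 k"
    proof
      fix w assume "w \<in> {w. Luk n w \<and> cnt1 w = 0 \<and> cnt2 w = k}"
      then have L: "length w = Suc n" "sum_list w = n" "\<forall>s\<le>n. 0 \<le> Hh w s" "cnt1 w = 0" "cnt2 w = k"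
        by (auto simp: Luk_def)
      define c where "c = take n w"
      have dr: "drop n w = [w!n]" using L(1) Cons_nth_drop_Suc[of n w] by simp
      have "0 \<le> Hh w n" using L by simp
      then have "n \<le> sum_list c" by (simp add: Hh_def c_def)
      moreover have "sum_list c + w!n = n" using L(2) dr
        by (metis append_take_drop_id c_def sum_list_append sum_list_simps(1) sum_list_simps(2) add.right_neutral)
      ultimately have wn: "w!n = 0" by simp
      have wc: "w = c @ [0]" using dr wn c_def by (metis append_take_drop_id)
      have lc: "length c = n" using L by (simp add: c_def)
      have "c \<in> FC n 0 k"
        unfolding FC_def using L wc lc Hh_snoc0[of _ c] cnt1_nz[of c]
        by (auto simp: cnt1_def cnt2_def)
      then show "w \<in> (\<lambda>c. c @ [0]) ` FC n 0 k" using wc by blast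
    qed
  qed
  have "inj_on (\<lambda>c. c @ [0]) (FC n 0 k)" by (rule inj_onI) simp
  then show ?thesis using eq by (simp add: card_image)
qed



lemma finite_S: "finite {w::nat list. length w = N \<and> filter (\<lambda>x. x \<noteq> 0) w = v}"
proof -
  have "{w::nat list. length w = N \<and> filter (\<lambda>x. x \<noteq> 0) w = v} \<subseteq> {w. set w \<subseteq> insert 0 (set v) \<and> length w = N}"
    by auto
  moreover have "finite {w. set w \<subseteq> insert 0 (set v) \<and> length w = N}"
    by (rule finite_lists_length_eq) simp
  ultimately show ?thesis by (rule finite_subset)
qed

lemma card_S: "0 \<notin> set v \<Longrightarrow> card {w::nat list. length w = N \<and> filter (\<lambda>x. x \<noteq> 0) w = v} = N choose length v"
proof (induction N arbitrary: v)
  case 0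
  show ?case
  proof (cases v)
    case Nil
    then have "{w::nat list. length w = 0 \<and> filter (\<lambda>x. x \<noteq> 0) w = v} = {[]}" by auto
    then show ?thesis using Nil by simp
  next
    case (Cons a v')
    then have "{w::nat list. length w = 0 \<and> filter (\<lambda>x. x \<noteq> 0) w = v} = {}" by auto
    then show ?thesis using Cons by simp
  qed
next
  case (Suc N)
  show ?case
  proof (cases v)
    case Nil
    have "{w::nat list. length w = Suc N \<and> filter (\<lambda>x. x \<noteq> 0) w = v}
          = Cons 0 ` {w. length w = N \<and> filter (\<lambda>x. x \<noteq> 0) w = v}"
      using Nil by (fastforce simp: length_Suc_conv image_iff split: if_splits)
    moreover have "card (Cons 0 ` {w::nat list. length w = N \<and> filter (\<lambda>x. x \<noteq> 0) w = v})
        = card {w::nat list. length w = N \<and> filter (\<lambda>x. x \<noteq> 0) w = v}"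
      by (rule card_image) simp
    ultimately show ?thesis using Suc.IH[of v] Suc.prems Nil by simp
  next
    case (Cons a v')
    have a0: "a \<noteq> 0" using Suc.prems Cons by auto
    have eq: "{w::nat list. length w = Suc N \<and> filter (\<lambda>x. x \<noteq> 0) w = v}
          = Cons 0 ` {w. length w = N \<and> filter (\<lambda>x. x \<noteq> 0) w = v}
            \<union> Cons a ` {w. length w = N \<and> filter (\<lambda>x. x \<noteq> 0) w = v'}"
      using Cons a0 by (fastforce simp: length_Suc_conv image_iff split: if_splits)
    have d: "Cons 0 ` {w::nat list. length w = N \<and> filter (\<lambda>x. x \<noteq> 0) w = v}
            \<inter> Cons a ` {w. length w = N \<and> filter (\<lambda>x. x \<noteq> 0) w = v'} = {}"
      using a0 by auto
    have c1: "card (Cons 0 ` {w::nat list. length w = N \<and> filter (\<lambda>x. x \<noteq> 0) w = v})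
        = N choose length v"
      using Suc.IH[of v] Suc.prems by (simp add: card_image)
    have c2: "card (Cons a ` {w::nat list. length w = N \<and> filter (\<lambda>x. x \<noteq> 0) w = v'})
        = N choose length v'"
      using Suc.IH[of v'] Suc.prems Cons by (simp add: card_image)
    show ?thesis
      unfolding eq using card_Un_disjoint[OF _ _ d] c1 c2 finite_S Cons by simp
  qed
qed

lemma sum_list_filter_nz: "sum_list (filter (\<lambda>x. x \<noteq> 0) (w::nat list)) = sum_list w"
  by (induction w) auto

lemma sum_list_plus2: "sum_list (map (\<lambda>x. x + 2) (u::nat list)) = sum_list u + 2 * length u"
  by (induction u) auto

lemma sum_ge2: "\<forall>x\<in>set (v::nat list). 2 \<le> x \<Longrightarrow> 2 * length v \<le> sum_list v"
  by (induction v) auto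

definition VV :: "nat \<Rightarrow> nat \<Rightarrow> nat list set" where
  "VV n k = {v. length v = k \<and> (\<forall>x\<in>set v. 2 \<le> x) \<and> sum_list v = n}"

lemma finite_VV: "finite (VV n k)"
proof -
  have "VV n k \<subseteq> {v. set v \<subseteq> {..n} \<and> length v = k}"
    by (auto simp: VV_def dest: member_le_sum_list)
  moreover have "finite {v. set v \<subseteq> {..n} \<and> length v = k}"
    by (rule finite_lists_length_eq) simp
  ultimately show ?thesis by (rule finite_subset)
qed

lemma card_Aset:
  "card {w. length w = Suc n \<and> sum_list w = n \<and> cnt1 w = 0 \<and> cnt2 w = k} = card (VV n k) * (Suc n choose k)"
proof -
  have fe: "filter (\<lambda>x. x \<noteq> 0) w = filter (\<lambda>m. 2 \<le> m) w" if "\<forall>x\<in>set w. x \<noteq> 1" for w :: "nat list"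
    using that by (intro filter_cong) auto
  have eq: "{w. length w = Suc n \<and> sum_list w = n \<and> cnt1 w = 0 \<and> cnt2 w = k}
      = (\<Union>v\<in>VV n k. {w. length w = Suc n \<and> filter (\<lambda>x. x \<noteq> 0) w = v})"
  proof
    show "{w. length w = Suc n \<and> sum_list w = n \<and> cnt1 w = 0 \<and> cnt2 w = k}
      \<subseteq> (\<Union>v\<in>VV n k. {w. length w = Suc n \<and> filter (\<lambda>x. x \<noteq> 0) w = v})"
    proof
      fix w assume w: "w \<in> {w. length w = Suc n \<and> sum_list w = n \<and> cnt1 w = 0 \<and> cnt2 w = k}"
      then have n1: "\<forall>x\<in>set w. x \<noteq> 1" using cnt1_nz[of w] by auto
      have "filter (\<lambda>x. x \<noteq> 0) w \<in> VV n k"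
        using w fe[OF n1] sum_list_filter_nz[of w] n1 by (auto simp: VV_def cnt2_def)
      then show "w \<in> (\<Union>v\<in>VV n k. {w. length w = Suc n \<and> filter (\<lambda>x. x \<noteq> 0) w = v})"
        using w by auto
    qed
  next
    show "(\<Union>v\<in>VV n k. {w. length w = Suc n \<and> filter (\<lambda>x. x \<noteq> 0) w = v})
      \<subseteq> {w. length w = Suc n \<and> sum_list w = n \<and> cnt1 w = 0 \<and> cnt2 w = k}"
    proof
      fix w assume "w \<in> (\<Union>v\<in>VV n k. {w. length w = Suc n \<and> filter (\<lambda>x. x \<noteq> 0) w = v})"
      then obtain v where v: "v \<in> VV n k" "length w = Suc n" "filter (\<lambda>x. x \<noteq> 0) w = v" by auto
      have n1: "\<forall>x\<in>set w. x \<noteq> 1"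
      proof
        fix x assume "x \<in> set w"
        show "x \<noteq> 1"
        proof
          assume "x = 1"
          then have "x \<in> set v" using v(3) \<open>x \<in> set w\<close> by auto
          then show False using v(1) \<open>x = 1\<close> by (auto simp: VV_def)
        qed
      qed
      have "cnt1 w = 0" using n1 by (auto simp: cnt1_def filter_empty_conv)
      moreover have "cnt2 w = k" using v fe[OF n1] by (auto simp: VV_def cnt2_def)
      moreover have "sum_list w = n" using v sum_list_filter_nz[of w] by (auto simp: VV_def)
      ultimately show "w \<in> {w. length w = Suc n \<and> sum_list w = n \<and> cnt1 w = 0 \<and> cnt2 w = k}"
        using v by simp
    qed
  qed
  have "card (\<Union>v\<in>VV n k. {w. length w = Suc n \<and> filter (\<lambda>x. x \<noteq> 0) w = v})
      = (\<Sum>v\<in>VV n k. card {w. length w = Suc n \<and> filter (\<lambda>x. x \<noteq> 0) w = v})"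
    by (rule card_UN_disjoint) (use finite_VV finite_S in blast)+
  also have "\<dots> = (\<Sum>v\<in>VV n k. Suc n choose k)"
  proof (rule sum.cong)
    fix v assume "v \<in> VV n k"
    then have "0 \<notin> set v" "length v = k" by (auto simp: VV_def)
    then show "card {w. length w = Suc n \<and> filter (\<lambda>x. x \<noteq> 0) w = v} = Suc n choose k"
      using card_S by simp
  qed simp
  finally show ?thesis unfolding eq by simp
qed

lemma card_VV:
  assumes "1 \<le> k"
  shows "card (VV n k) = (if 2*k \<le> n then (n - k - 1) choose (k - 1) else 0)"
proof (cases "2*k \<le> n")
  case False
  have "VV n k = {}" using False sum_ge2 by (fastforce simp: VV_def)
  then show ?thesis using False by simp
next
  case True
  have eq: "VV n k = map (\<lambda>x. x + 2) ` {u. length u = k \<and> sum_list u = n - 2*k}"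
  proof
    show "VV n k \<subseteq> map (\<lambda>x. x + 2) ` {u. length u = k \<and> sum_list u = n - 2*k}"
    proof
      fix v assume v: "v \<in> VV n k"
      define u where "u = map (\<lambda>x. x - 2) v"
      have h: "x - 2 + 2 = x" if "x \<in> set v" for x
      proof -
        have "2 \<le> x" using v that by (simp add: VV_def)
        then show ?thesis by simp
      qed
      have mv: "map (\<lambda>x. x + 2) u = v" unfolding u_def map_map comp_def by (rule map_idI) (rule h)
      have lu: "length u = k" using v by (simp add: u_def VV_def)
      have "sum_list v = sum_list u + 2 * length u" using sum_list_plus2[of u] mv by simp
      then have su: "sum_list u = n - 2*k" using lu v unfolding VV_def by auto
      show "v \<in> map (\<lambda>x. x + 2) ` {u. length u = k \<and> sum_list u = n - 2*k}"
        by (rule rev_image_eqI[of u]) (use mv lu su in auto)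
    qed
  next
    show "map (\<lambda>x. x + 2) ` {u. length u = k \<and> sum_list u = n - 2*k} \<subseteq> VV n k"
      using True sum_list_plus2 by (auto simp: VV_def)
  qed
  have "inj_on (map (\<lambda>x::nat. x + 2)) {u. length u = k \<and> sum_list u = n - 2*k}"
  proof -
    have "inj (\<lambda>x::nat. x + 2)" by (simp add: inj_def)
    then have "inj (map (\<lambda>x::nat. x + 2))" by (rule inj_mapI)
    then show ?thesis by (rule inj_on_subset) simp
  qed
  then have "card (VV n k) = card {u::nat list. length u = k \<and> sum_list u = n - 2*k}"
    unfolding eq by (rule card_image)
  also have "\<dots> = (n - 2*k + k - 1) choose (n - 2*k)" by (rule card_length_sum_list)
  also have "n - 2*k + k - 1 = n - k - 1" using True by simp
  also have "(n - k - 1) choose (n - 2*k) = (n - k - 1) choose (k - 1)"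
  proof -
    have "n - 2*k \<le> n - k - 1" using True assms by simp
    then have "(n - k - 1) choose (n - 2*k) = (n - k - 1) choose ((n - k - 1) - (n - 2*k))"
      by (rule binomial_symmetric)
    also have "(n - k - 1) - (n - 2*k) = k - 1" using True assms by simp
    finally show ?thesis .
  qed
  finally show ?thesis using True by simp
qed



fun dl :: "nat list \<Rightarrow> bool list" where
  "dl [] = []"
| "dl (c # cs) = replicate c True @ False # dl cs"

lemma dl_inj: "dl a = dl b \<Longrightarrow> a = b"
proof (induction a arbitrary: b)
  case Nil then show ?case by (cases b) auto
next
  case (Cons x xs)
  show ?case
  proof (cases b)
    case Nil then show ?thesis using Cons.prems by simp
  next
    case (Cons y ys)
    have e: "replicate x True @ False # dl xs = replicate y True @ False # dl ys"
      using Cons.prems Cons by simp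
    have tw: "length (takeWhile id (replicate m True @ False # r)) = m" for m r
      by (induction m) auto
    have dw: "dropWhile id (replicate m True @ False # r) = False # r" for m r
      by (induction m) auto
    have "x = y" using tw[of x "dl xs"] tw[of y "dl ys"] e by metis
    moreover have "dl xs = dl ys" using dw[of x "dl xs"] dw[of y "dl ys"] e by simp
    ultimately show ?thesis using Cons Cons.IH by simp
  qed
qed

lemma dl_surj: "xs = [] \<or> \<not> last xs \<Longrightarrow> \<exists>c. xs = dl c"
proof (induction xs)
  case Nil show ?case by (metis dl.simps(1))
next
  case (Cons x xs)
  show ?case
  proof (cases x)
    case True
    then have "xs \<noteq> []" using Cons.prems by auto
    then have "\<not> last xs" using Cons.prems by simp
    then obtain c where c: "xs = dl c" using Cons.IH by blast
    then have "c \<noteq> []" using \<open>xs \<noteq> []\<close> by auto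
    then obtain a cs where "c = a # cs" by (cases c) auto
    then have "x # xs = dl (Suc a # cs)" using c True by simp
    then show ?thesis by blast
  next
    case False
    have "xs = [] \<or> \<not> last xs" using Cons.prems by (cases xs) auto
    then obtain c where c: "xs = dl c" using Cons.IH by blast
    then have "x # xs = dl (0 # c)" using False by simp
    then show ?thesis by blast
  qed
qed

lemma dl_counts: "length (filter id (dl c)) = sum_list c" "length (filter Not (dl c)) = length c"
  "length (dl c) = sum_list c + length c"
  by (induction c) auto

lemma height_Nil[simp]: "height [] = 0" by (simp add: height_def)
lemma height_Cons[simp]: "height (x # xs) = (if x then 1 else -1) + height xs"
  by (simp add: height_def)

definition NN :: "int \<Rightarrow> bool list \<Rightarrow> bool" where
  "NN h xs \<longleftrightarrow> (\<forall>i \<le> length xs. 0 \<le> h + height (take i xs))"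

lemma all_le_Suc: "(\<forall>i \<le> Suc m. P i) \<longleftrightarrow> P 0 \<and> (\<forall>i \<le> m. P (Suc i))"
  by (metis Suc_le_mono le0 not0_implies_Suc)

lemma NN_Nil[simp]: "NN h [] \<longleftrightarrow> 0 \<le> h" by (simp add: NN_def)

lemma NN_Cons: "NN h (x # xs) \<longleftrightarrow> 0 \<le> h \<and> NN (h + (if x then 1 else -1)) xs"
  unfolding NN_def by (simp only: length_Cons all_le_Suc) (simp add: algebra_simps)

lemma NN_rep: "NN h (replicate m True @ r) \<longleftrightarrow> 0 \<le> h \<and> NN (h + int m) r"
proof (induction m arbitrary: h)
  case 0 then show ?case by (cases r) (auto simp: NN_Cons)
next
  case (Suc m) then show ?case by (auto simp: NN_Cons algebra_simps)
qed

lemma Hh_Cons_Suc: "Hh (a # cs) (Suc s) = int a - 1 + Hh cs s"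
  by (simp add: Hh_def)

lemma NN_dl: "NN h (dl c) \<longleftrightarrow> (\<forall>s \<le> length c. 0 \<le> h + Hh c s)"
proof (induction c arbitrary: h)
  case Nil then show ?case by simp
next
  case (Cons a cs)
  have "NN h (dl (a # cs)) \<longleftrightarrow> 0 \<le> h \<and> NN (h + int a - 1) (dl cs)"
    by (auto simp: NN_rep NN_Cons algebra_simps)
  also have "\<dots> \<longleftrightarrow> 0 \<le> h \<and> (\<forall>s \<le> length cs. 0 \<le> h + int a - 1 + Hh cs s)"
    using Cons.IH by simp
  also have "\<dots> \<longleftrightarrow> (\<forall>s \<le> length (a # cs). 0 \<le> h + Hh (a # cs) s)"
    by (simp only: length_Cons all_le_Suc) (simp add: Hh_Cons_Suc algebra_simps)
  finally show ?case .
qed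

definition HL :: "int \<Rightarrow> bool list \<Rightarrow> bool" where
  "HL h xs \<longleftrightarrow> (\<exists>i. Suc i < length xs \<and> xs!i \<and> \<not> xs!Suc i \<and> h + height (take (Suc i) xs) = 1)"

lemma ex_nat_split: "(\<exists>i::nat. P i) \<longleftrightarrow> P 0 \<or> (\<exists>i. P (Suc i))"
  by (metis not0_implies_Suc)

lemma HL_Nil[simp]: "\<not> HL h []" by (simp add: HL_def)

lemma HL_Cons: "HL h (x # xs) \<longleftrightarrow> (x \<and> xs \<noteq> [] \<and> \<not> hd xs \<and> h = 0) \<or> HL (h + (if x then 1 else -1)) xs"
proof -
  have "HL h (x # xs) \<longleftrightarrow> (Suc 0 < length (x # xs) \<and> x \<and> \<not> (x#xs)!Suc 0 \<and> h + height [x] = 1)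
      \<or> (\<exists>i. Suc (Suc i) < length (x # xs) \<and> (x#xs)!Suc i \<and> \<not> (x#xs)!Suc (Suc i)
            \<and> h + height (take (Suc (Suc i)) (x # xs)) = 1)"
    unfolding HL_def by (subst ex_nat_split) simp
  also have "\<dots> \<longleftrightarrow> (x \<and> xs \<noteq> [] \<and> \<not> hd xs \<and> h = 0) \<or> HL (h + (if x then 1 else -1)) xs"
    unfolding HL_def by (cases xs) (auto simp: algebra_simps)
  finally show ?thesis .
qed

lemma HL_rep: "HL h (replicate m True @ False # r) \<longleftrightarrow> (1 \<le> m \<and> h + int m = 1) \<or> HL (h + int m - 1) r"
proof (induction m arbitrary: h)
  case 0 then show ?case by (simp add: HL_Cons)
next
  case (Suc m)
  have "HL h (replicate (Suc m) True @ False # r) \<longleftrightarrow>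
        (m = 0 \<and> h = 0) \<or> HL (h + 1) (replicate m True @ False # r)"
    by (cases m) (simp_all add: HL_Cons)
  also have "\<dots> \<longleftrightarrow> (1 \<le> Suc m \<and> h + int (Suc m) = 1) \<or> HL (h + int (Suc m) - 1) r"
    using Suc.IH[of "h+1"] by (cases m) (auto simp: algebra_simps)
  finally show ?case .
qed

lemma ex_less_Suc: "(\<exists>s < Suc m. P s) \<longleftrightarrow> P 0 \<or> (\<exists>s < m. P (Suc s))"
  by (metis less_Suc_eq_0_disj Suc_less_eq zero_less_Suc)

lemma HL_dl: "HL h (dl c) \<longleftrightarrow> (\<exists>s < length c. 1 \<le> c!s \<and> h + Hh c s + int (c!s) = 1)"
proof (induction c arbitrary: h)
  case Nil then show ?case by simp
next
  case (Cons a cs)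
  have "HL h (dl (a # cs)) \<longleftrightarrow> (1 \<le> a \<and> h + int a = 1) \<or> HL (h + int a - 1) (dl cs)"
    by (simp add: HL_rep)
  also have "\<dots> \<longleftrightarrow> (1 \<le> a \<and> h + int a = 1) \<or>
      (\<exists>s < length cs. 1 \<le> cs!s \<and> h + int a - 1 + Hh cs s + int (cs!s) = 1)"
    using Cons.IH by simp
  also have "\<dots> \<longleftrightarrow> (\<exists>s < length (a # cs). 1 \<le> (a#cs)!s \<and> h + Hh (a#cs) s + int ((a#cs)!s) = 1)"
    by (simp only: length_Cons ex_less_Suc) (simp add: Hh_Cons_Suc algebra_simps)
  finally show ?case .
qed

lemma ascents_rep: "ascents (replicate m True @ False # r) = (if m = 0 then [] else [m]) @ ascents r"
proof (cases m)
  case 0 then show ?thesis by simp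
next
  case (Suc m')
  have tw: "takeWhile id (replicate m' True @ False # r) = replicate m' True"
    by (induction m') auto
  have dw: "dropWhile id (replicate m' True @ False # r) = False # r"
    by (induction m') auto
  show ?thesis using Suc tw dw by simp
qed

lemma ascents_dl: "ascents (dl c) = filter (\<lambda>x. x \<noteq> 0) c"
  by (induction c) (auto simp: ascents_rep)



lemma has_hill_HL: "has_hill xs \<longleftrightarrow> HL 0 xs"
  by (simp add: has_hill_def HL_def)

lemma dyck_NN: "dyck_path n xs \<longleftrightarrow> length xs = 2 * n \<and> length (filter id xs) = n \<and> NN 0 xs \<and> height xs = 0"
  by (simp add: dyck_path_def NN_def)

lemma height_dl: "height (dl c) = int (sum_list c) - int (length c)"
  by (simp add: height_def dl_counts)

lemma short_dl: "short_ascents (dl c) = cnt1 c"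
  unfolding short_ascents_def cnt1_def ascents_dl filter_filter
  by (metis (mono_tags, lifting) filter_cong zero_neq_one)

lemma long_dl: "long_ascents (dl c) = cnt2 c"
  unfolding long_ascents_def cnt2_def ascents_dl filter_filter
  by (rule arg_cong[where f=length], rule filter_cong) auto


lemma dyck_last:
  assumes "dyck_path n xs" "1 \<le> n"
  shows "xs = [] \<or> \<not> last xs"
proof (rule ccontr)
  assume "\<not> (xs = [] \<or> \<not> last xs)"
  then have ne: "xs \<noteq> []" and l: "last xs" by auto
  have xs: "butlast xs @ [True] = xs" using append_butlast_last_id[OF ne] l by simp
  have A: "height (butlast xs @ [True]) = height (butlast xs) + 1"
    by (simp add: height_def)
  have hx: "height xs = height (butlast xs) + 1" using A by (simp only: xs)
  have "0 \<le> height (take (length xs - 1) xs)" using assms by (simp add: dyck_path_def)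
  moreover have "take (length xs - 1) xs = butlast xs" by (simp add: butlast_conv_take)
  moreover have "height xs = 0" using assms by (simp add: dyck_path_def)
  ultimately show False using hx by simp
qed

lemma set_eq:
  assumes "2 \<le> n"
  shows "{xs. fine_path n xs \<and> short_ascents xs = j \<and> long_ascents xs = k} = dl ` FC n j k"
proof
  show "dl ` FC n j k \<subseteq> {xs. fine_path n xs \<and> short_ascents xs = j \<and> long_ascents xs = k}"
  proof
    fix xs assume "xs \<in> dl ` FC n j k"
    then obtain c where c: "c \<in> FC n j k" "xs = dl c" by auto
    have len: "length c = n" and sum: "sum_list c = n" and nn: "\<forall>s\<le>n. 0 \<le> Hh c s"
      and fine: "\<forall>s<n. c!s = 1 \<longrightarrow> 1 \<le> Hh c s" and c1: "cnt1 c = j" and c2: "cnt2 c = k"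
      using c by (auto simp: FC_def)
    have d: "dyck_path n xs"
      unfolding dyck_NN c(2) using len sum nn by (simp add: dl_counts NN_dl height_dl)
    have "\<not> HL 0 (dl c)"
    proof
      assume "HL 0 (dl c)"
      then obtain s where s: "s < n" "1 \<le> c!s" "Hh c s + int (c!s) = 1" using HL_dl len by auto
      have "0 \<le> Hh c s" using nn s by simp
      then have "c!s = 1" "Hh c s = 0" using s by auto
      then show False using fine s by auto
    qed
    then have "fine_path n xs" using d c by (simp add: fine_path_def has_hill_HL)
    then show "xs \<in> {xs. fine_path n xs \<and> short_ascents xs = j \<and> long_ascents xs = k}"
      using c c1 c2 by (simp add: short_dl long_dl)
  qed
next
  show "{xs. fine_path n xs \<and> short_ascents xs = j \<and> long_ascents xs = k} \<subseteq> dl ` FC n j k"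
  proof
    fix xs assume xs: "xs \<in> {xs. fine_path n xs \<and> short_ascents xs = j \<and> long_ascents xs = k}"
    then have d: "dyck_path n xs" and nh: "\<not> HL 0 xs"
      by (auto simp: fine_path_def has_hill_HL)
    obtain c where c: "xs = dl c" using dyck_last[OF d] assms dl_surj by fastforce
    have sum: "sum_list c = n" using d c by (simp add: dyck_path_def dl_counts)
    have len: "length c = n" using d c sum by (simp add: dyck_path_def dl_counts)
    have nn: "\<forall>s\<le>n. 0 \<le> Hh c s" using d c len by (simp add: dyck_NN NN_dl)
    have fine: "\<forall>s<n. c!s = 1 \<longrightarrow> 1 \<le> Hh c s"
    proof (intro allI impI)
      fix s assume s: "s < n" "c!s = 1"
      show "1 \<le> Hh c s"
      proof (rule ccontr)
        assume "\<not> 1 \<le> Hh c s"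
        moreover have "0 \<le> Hh c s" using nn s by simp
        ultimately have "Hh c s = 0" by simp
        then have "HL 0 (dl c)" using HL_dl[of 0 c] s len by auto
        then show False using nh c by simp
      qed
    qed
    have "c \<in> FC n j k" using xs c sum len nn fine by (simp add: FC_def short_dl long_dl)
    then show "xs \<in> dl ` FC n j k" using c by blast
  qed
qed


lemma FC0_formula:
  assumes "1 \<le> k"
  shows "Suc n * card (FC n 0 k) = (if 2*k \<le> n then (n - k - 1) choose (k - 1) else 0) * (Suc n choose k)"
proof -
  have inv: "\<And>r w. (cnt1 (rotate r w) = 0 \<and> cnt2 (rotate r w) = k) = (cnt1 w = 0 \<and> cnt2 w = k)"
    by (simp add: cnt1_def cnt2_def rotate_filter_len)
  have "Suc n * card (FC n 0 k) = Suc n * card {w. Luk n w \<and> (cnt1 w = 0 \<and> cnt2 w = k)}"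
    by (simp add: FC0_Luk)
  also have "\<dots> = card {w. length w = Suc n \<and> sum_list w = n \<and> (cnt1 w = 0 \<and> cnt2 w = k)}"
    using cycle_lemma[of "\<lambda>w. cnt1 w = 0 \<and> cnt2 w = k" n, OF inv] by simp
  also have "\<dots> = card (VV n k) * (Suc n choose k)" using card_Aset by simp
  finally show ?thesis using card_VV[OF assms] by simp
qed


theorem mainTheorem4:
  fixes n k j :: nat
  assumes "n \<ge> 2" and "k \<ge> 1"
  shows "real (card {xs. fine_path n xs \<and> short_ascents xs = j \<and> long_ascents xs = k})
    = 1 / real (n + 1) * real (ibinom (int n - 1 - int k) (int k - 1))
        * real (ibinom (int n - 2 * int k) (int j)) * real (ibinom (int n + 1) (int k))"
proof -
  define V where "V = (if 2*k \<le> n then (n - k - 1) choose (k - 1) else 0)"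
  have inj: "inj_on dl (FC n j k)" by (rule inj_onI) (rule dl_inj)
  have cS: "card {xs. fine_path n xs \<and> short_ascents xs = j \<and> long_ascents xs = k}
      = card (FC n 0 k) * ((n - 2*k) choose j)"
    unfolding set_eq[OF assms(1)] card_image[OF inj] by (rule FC_formula)
  have F0: "Suc n * card (FC n 0 k) = V * (Suc n choose k)"
    using FC0_formula[OF assms(2)] by (simp add: V_def)
  have i1: "ibinom (int n - 1 - int k) (int k - 1) = V"
  proof (cases "2*k \<le> n")
    case True
    then have "nat (int n - 1 - int k) = n - k - 1" "nat (int k - 1) = k - 1" using assms by auto
    then show ?thesis using True assms by (simp add: ibinom_def V_def)
  next
    case False
    then show ?thesis using assms by (simp add: ibinom_def V_def)
  qed
  have i3: "ibinom (int n + 1) (int k) = Suc n choose k"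
  proof (cases "k \<le> Suc n")
    case True
    have "nat (int n + 1) = Suc n" by simp
    then show ?thesis using True by (simp add: ibinom_def)
  next
    case False
    then show ?thesis by (simp add: ibinom_def binomial_eq_0)
  qed
  show ?thesis
  proof (cases "2*k \<le> n")
    case True
    have i2: "ibinom (int n - 2 * int k) (int j) = (n - 2*k) choose j"
    proof (cases "j \<le> n - 2*k")
      case True
      have "nat (int n - 2 * int k) = n - 2*k" "nat (int j) = j" using \<open>2*k \<le> n\<close> by auto
      then show ?thesis using True \<open>2*k \<le> n\<close> by (simp add: ibinom_def)
    next
      case False
      then show ?thesis using \<open>2*k \<le> n\<close> by (simp add: ibinom_def binomial_eq_0)
    qed
    have "real (Suc n) * real (card (FC n 0 k)) = real V * real (Suc n choose k)"
      using F0 by (metis of_nat_mult)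
    then have "real (card (FC n 0 k)) = real V * real (Suc n choose k) / real (Suc n)"
      by (simp add: field_simps)
    then show ?thesis unfolding cS i1 i2 i3 by simp
  next
    case False
    then have "V = 0" by (simp add: V_def)
    then have "card (FC n 0 k) = 0" using F0 by simp
    then show ?thesis unfolding cS i1 using \<open>V = 0\<close> by simp
  qed
qed


end
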